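(* Let $K$ be a finite field and let $d$ be an integer with $\gcd(d,|K|-1)=1$. For every $b\in K$ with $b\neq 1$, $$\sum_{a\in K^\times}W_{K,d}(a)\,W_{K,d}(ba)=0.$$
   Context: Let $p$ be the characteristic of $K$. $\psi_K(x)=\exp(2\pi i\,\mathrm{Tr}_{K/\mathbb{F}_p}(x)/p)$ and $W_{K,d}(a)=\sum_{x\in K}\psi_K(x^d+ax)$ for $a\in K$. *)

theory Defs
  imports Complex_Main
begin

definition ff_degree :: "'a::{finite,field} itself \<Rightarrow> nat" where
  "ff_degree T = (THE n. CHAR('a) ^ n = card (UNIV::'a set))"

text \<open>Absolute trace Tr_{K/F_p}(x) = sum of x^(p^i), i < n; its value lies in the prime field.\<close>
definition ff_trace :: "'a::{finite,field} \<Rightarrow> 'a" where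
  "ff_trace x = (\<Sum>i<ff_degree TYPE('a). x ^ (CHAR('a) ^ i))"

text \<open>The canonical additive character: the prime-field element Tr(x) is identified with
  the unique k in {0..p-1} with of_nat k = Tr(x).\<close>
definition ff_psi :: "'a::{finite,field} \<Rightarrow> complex" where
  "ff_psi x = exp (2 * pi * \<i> *
      of_nat (THE k. k < CHAR('a) \<and> of_nat k = ff_trace x) / of_nat CHAR('a))"

definition ff_W :: "nat \<Rightarrow> 'a::{finite,field} \<Rightarrow> complex" where
  "ff_W d a = (\<Sum>x\<in>(UNIV::'a set). ff_psi (x ^ d + a * x))"

end

theory Submission
  imports Defs "HOL-Algebra.Sylow" "HOL-Computational_Algebra.Polynomial"
begin

definition addG :: "'a::{finite,field} monoid" where "addG = \<lparr>carrier = UNIV, monoid.mult = (+), one = 0\<rparr>"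
lemma group_addG: "group (addG::'a::{finite,field} monoid)"
  unfolding addG_def
  apply (rule groupI) apply (auto simp: add.assoc)
  by (metis ab_left_minus)

lemma prime_char: "prime CHAR('a::{finite,field})"
proof -
  have "CHAR('a) > 0" by (rule finite_imp_CHAR_pos) simp
  then show ?thesis by (rule prime_CHAR_semidom)
qed

lemma prime_dvd_card:
  assumes r: "prime r" and dv: "r dvd card (UNIV::'a::{finite,field} set)"
  shows "r = CHAR('a)"
proof -
  have ord: "Coset.order (addG::'a monoid) = r ^ 1 * (card (UNIV::'a set) div r)"
    using dv by (simp add: Coset.order_def addG_def)
  obtain H where H: "subgroup H (addG::'a monoid)" "card H = r"
    using sylow_thm[OF r group_addG ord] by (auto simp: addG_def)
  have fin: "finite H" by simp
  have clos: "\<And>x y. x \<in> H \<Longrightarrow> y \<in> H \<Longrightarrow> x + y \<in> H"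
    using H(1) unfolding subgroup_def addG_def by auto
  have "card H \<ge> 2" using H(2) r prime_ge_2_nat by auto
  have "\<not> H \<subseteq> {0}"
  proof
    assume "H \<subseteq> {0}"
    then have "card H \<le> card {0::'a}" by (rule card_mono[rotated]) simp
    then show False using \<open>card H \<ge> 2\<close> by simp
  qed
  then obtain x where x: "x \<in> H" "x \<noteq> 0" by blast
  have img: "(\<lambda>y. x + y) ` H = H"
    by (rule endo_inj_surj) (auto simp: inj_on_def clos x)
  have "(\<Sum>y\<in>H. y) = (\<Sum>y\<in>H. x + y)"
    by (rule sum.reindex_bij_betw[symmetric]) (simp add: bij_betw_def inj_on_def img)
  also have "\<dots> = of_nat (card H) * x + (\<Sum>y\<in>H. y)"
    by (simp add: sum.distrib)
  finally have "of_nat r * x = 0" using H(2) by simp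
  with x have "of_nat r = (0::'a)" by simp
  then have "CHAR('a) dvd r" by (simp add: of_nat_eq_0_iff_char_dvd)
  then show ?thesis using r prime_char[where 'a='a]
    by (metis primes_dvd_imp_eq)
qed

lemma card_char_pow: "\<exists>n. card (UNIV::'a::{finite,field} set) = CHAR('a) ^ n"
proof -
  let ?q = "card (UNIV::'a set)"
  have q: "?q > 0" by (simp add: card_gt_0_iff)
  have "prime_factors ?q \<subseteq> {CHAR('a)}"
    using prime_dvd_card[where 'a='a] by (auto simp: in_prime_factors_iff)
  then have "prime_factors ?q = {} \<or> prime_factors ?q = {CHAR('a)}" by blast
  then show ?thesis
  proof
    assume "prime_factors ?q = {}"
    then have "?q = 1" using q by (metis prod_mset_empty prod_mset_prime_factorization_nat set_mset_eq_empty_iff not_gr0)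
    then show ?thesis by (intro exI[of _ 0]) simp
  next
    assume "prime_factors ?q = {CHAR('a)}"
    then have "?q = CHAR('a) ^ multiplicity (CHAR('a)) ?q"
      using prod_prime_factors[of ?q] q by simp
    then show ?thesis by blast
  qed
qed


lemma card_deg: "card (UNIV::'a::{finite,field} set) = CHAR('a) ^ ff_degree TYPE('a)"
proof -
  have p1: "CHAR('a) > 1" using prime_char[where 'a='a] prime_gt_1_nat by blast
  obtain n where n: "card (UNIV::'a set) = CHAR('a) ^ n" using card_char_pow by blast
  have "\<exists>!n. CHAR('a) ^ n = card (UNIV::'a set)"
    using n p1 power_inject_exp by (metis)
  then show ?thesis unfolding ff_degree_def by (metis (mono_tags, lifting) theI')
qed

lemma pow_card_same: "(x::'a::{finite,field}) ^ card (UNIV :: 'a set) = x"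
proof (cases "x = 0")
  case False
  have "x * (\<Prod>y\<in>UNIV-{0}. x * y) = x * x ^ (card (UNIV :: 'a set) - 1) * \<Prod>(UNIV-{0})"
    by (simp add: prod.distrib mult_ac)
  also have "x * x ^ (card (UNIV :: 'a set) - 1) = x ^ Suc (card (UNIV :: 'a set) - 1)"
    by (subst power_Suc) auto
  also have "Suc (card (UNIV :: 'a set) - 1) = card (UNIV :: 'a set)"
    using finite_UNIV_card_ge_0[where ?'a = 'a] by simp
  also have "(\<Prod>y\<in>UNIV-{0}. x * y) = (\<Prod>y\<in>UNIV-{0}. y)"
    by (rule prod.reindex_bij_witness[of _ "\<lambda>y. y / x" "\<lambda>y. x * y"]) (use False in auto)
  finally show ?thesis
    by simp
qed (use finite_UNIV_card_ge_0[where ?'a = 'a] in auto)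

lemma trace_add: "ff_trace (x + y) = ff_trace x + ff_trace (y::'a::{finite,field})"
  unfolding ff_trace_def
  by (simp add: freshmans_dream'[OF prime_char] sum.distrib)

lemma trace_pow: "ff_trace (x::'a::{finite,field}) ^ CHAR('a) = ff_trace x"
proof -
  let ?p = "CHAR('a)" and ?n = "ff_degree TYPE('a)"
  have "ff_trace x ^ ?p = (\<Sum>i<?n. (x ^ (?p ^ i)) ^ ?p)"
    unfolding ff_trace_def by (rule freshmans_dream_sum[OF prime_char refl])
  also have "\<dots> = (\<Sum>i<?n. x ^ (?p ^ Suc i))"
    by (simp add: power_mult[symmetric] mult.commute)
  also have "\<dots> = (\<Sum>i<Suc ?n. x ^ (?p ^ i)) - x ^ (?p ^ 0)"
    by (subst sum.lessThan_Suc_shift) simp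
  also have "\<dots> = (\<Sum>i<?n. x ^ (?p ^ i)) + x ^ (?p ^ ?n) - x"
    by simp
  also have "x ^ (?p ^ ?n) = x" using pow_card_same card_deg by metis
  finally show ?thesis unfolding ff_trace_def by simp
qed

lemma of_nat_mod_char: "(of_nat (m mod CHAR('a)) :: 'a::{finite,field}) = of_nat m"
proof -
  have "(of_nat m::'a) = of_nat (m div CHAR('a) * CHAR('a) + m mod CHAR('a))" by simp
  also have "\<dots> = of_nat (m mod CHAR('a))" by (simp only: of_nat_add of_nat_mult of_nat_CHAR) simp
  finally show ?thesis by simp
qed

lemma of_nat_inj_char:
  assumes "a < CHAR('a)" "b < CHAR('a)" "(of_nat a :: 'a::{finite,field}) = of_nat b"
  shows "a = b"
proof (rule ccontr)
  assume ne: "a \<noteq> b"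
  { fix a b :: nat assume ab: "a < b" "b < CHAR('a)" "(of_nat a :: 'a) = of_nat b"
    then have "(of_nat (b - a) :: 'a) = 0" by (simp add: of_nat_diff)
    then have "CHAR('a) dvd (b - a)" by (simp add: of_nat_eq_0_iff_char_dvd)
    then have False using ab by (meson diff_less_mono dvd_imp_le less_imp_diff_less zero_less_diff diff_le_self not_le)
  }
  then show False using ne assms by (metis linorder_neqE_nat)
qed

lemma of_nat_pow_char: "(of_nat k :: 'a::{finite,field}) ^ CHAR('a) = of_nat k"
proof (induction k)
  case 0 then show ?case using prime_char[where 'a='a] by (simp add: prime_gt_0_nat)
next
  case (Suc k)
  then show ?case by (simp add: freshmans_dream[OF prime_char refl])
qed

lemma fixed_prime_field:
  assumes y: "(y::'a::{finite,field}) ^ CHAR('a) = y"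
  shows "\<exists>k<CHAR('a). of_nat k = y"
proof -
  let ?p = "CHAR('a)"
  have p2: "?p \<ge> 2" using prime_char[where 'a='a] prime_ge_2_nat by blast
  define P :: "'a poly" where "P = [:0, -1:] + monom 1 ?p"
  have degP: "degree P = ?p"
    unfolding P_def using p2 by (subst degree_add_eq_right) (auto simp: degree_monom_eq)
  then have P0: "P \<noteq> 0" using p2 by auto
  have evP: "poly P z = z ^ ?p - z" for z by (simp add: P_def poly_monom)
  have A: "of_nat ` {..<?p} \<subseteq> {z. poly P z = 0}"
    by (auto simp: evP of_nat_pow_char)
  have cardA: "card (of_nat ` {..<?p} :: 'a set) = ?p"
    by (subst card_image) (auto simp: inj_on_def intro: of_nat_inj_char)
  have "card {z. poly P z = 0} \<le> ?p" using card_poly_roots_bound[OF P0] degP by simp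
  moreover have "card (of_nat ` {..<?p} :: 'a set) \<le> card {z. poly P z = 0}"
    using A by (intro card_mono) auto
  ultimately have "of_nat ` {..<?p} = {z. poly P z = 0}"
    using A cardA by (intro card_subset_eq) auto
  moreover have "y \<in> {z. poly P z = 0}" using y by (simp add: evP)
  ultimately have "y \<in> of_nat ` {..<?p}" by simp
  then show ?thesis by auto
qed

definition trk :: "'a::{finite,field} \<Rightarrow> nat" where
  "trk x = (THE k. k < CHAR('a) \<and> of_nat k = ff_trace x)"

lemma trk: "trk x < CHAR('a) \<and> (of_nat (trk x) :: 'a::{finite,field}) = ff_trace x"
proof -
  have "\<exists>!k. k < CHAR('a) \<and> (of_nat k :: 'a) = ff_trace x"
    using fixed_prime_field[OF trace_pow[of x]] of_nat_inj_char by metis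
  then show ?thesis unfolding trk_def by (rule theI')
qed

lemma trk_unique: "k < CHAR('a) \<Longrightarrow> (of_nat k :: 'a::{finite,field}) = ff_trace x \<Longrightarrow> trk x = k"
  using trk[of x] of_nat_inj_char by metis

definition ee :: "'a::{finite,field} itself \<Rightarrow> nat \<Rightarrow> complex" where
  "ee T k = exp (2 * pi * \<i> * of_nat k / of_nat CHAR('a))"

lemma psi_ee: "ff_psi (x::'a::{finite,field}) = ee TYPE('a) (trk x)"
  unfolding ff_psi_def ee_def trk_def ..

lemma ee_add: "ee T (a + b) = ee T a * ee T b"
  unfolding ee_def by (simp add: exp_add[symmetric] add_divide_distrib distrib_left)

lemma ee_mod: "ee (TYPE('a::{finite,field})) (m mod CHAR('a)) = ee TYPE('a) m"
proof -
  let ?p = "CHAR('a)"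
  have p0: "?p > 0" using prime_char[where 'a='a] prime_gt_0_nat by blast
  have "ee TYPE('a) m = ee TYPE('a) (?p * (m div ?p)) * ee TYPE('a) (m mod ?p)"
    by (simp add: ee_add[symmetric])
  also have "ee TYPE('a) (?p * (m div ?p)) = exp (of_nat (m div ?p) * (2 * pi * \<i>))"
    unfolding ee_def using p0 by (simp add: field_simps)
  also have "\<dots> = 1" by (simp add: exp_of_nat_mult)
  finally show ?thesis by simp
qed

lemma psi_add: "ff_psi (x + y) = ff_psi x * ff_psi (y::'a::{finite,field})"
proof -
  let ?p = "CHAR('a)"
  have p0: "?p > 0" using prime_char[where 'a='a] prime_gt_0_nat by blast
  have "trk (x + y) = (trk x + trk y) mod ?p"
    by (rule trk_unique) (use p0 trk[of x] trk[of y] in \<open>auto simp: of_nat_mod_char trace_add\<close>)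
  then show ?thesis by (simp add: psi_ee ee_mod ee_add)
qed

lemma trace_zero: "ff_trace (0::'a::{finite,field}) = 0"
proof -
  have "CHAR('a) \<noteq> 0" using prime_char[where 'a='a] by (simp add: prime_gt_0_nat)
  then show ?thesis unfolding ff_trace_def by (simp add: power_0_left)
qed

lemma psi_zero: "ff_psi (0::'a::{finite,field}) = 1"
proof -
  have "trk (0::'a) = 0" using prime_char[where 'a='a]
    by (intro trk_unique) (auto simp: trace_zero prime_gt_0_nat)
  then show ?thesis by (simp add: psi_ee ee_def)
qed



lemma trace_nonzero: "\<exists>x::'a::{finite,field}. ff_trace x \<noteq> 0"
proof (rule ccontr)
  assume H: "\<not> ?thesis"
  let ?p = "CHAR('a)" and ?n = "ff_degree TYPE('a)"
  have p2: "?p \<ge> 2" using prime_char[where 'a='a] prime_ge_2_nat by blast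
  have "card (UNIV::'a set) \<ge> 2"
  proof -
    have "card {0::'a, 1} \<le> card (UNIV::'a set)" by (rule card_mono) auto
    then show ?thesis by simp
  qed
  then have n1: "?n \<ge> 1" using card_deg[where 'a='a] by (cases ?n) auto
  define T :: "'a poly" where "T = (\<Sum>i<?n. monom 1 (?p ^ i))"
  have evT: "poly T x = ff_trace x" for x by (simp add: T_def poly_sum poly_monom ff_trace_def)
  have degT: "degree T \<le> ?p ^ (?n - 1)"
    unfolding T_def
  proof (rule degree_sum_le)
    fix i assume "i \<in> {..<?n}"
    then have "?p ^ i \<le> ?p ^ (?n - 1)" using p2 by (intro power_increasing) auto
    then show "degree (monom (1::'a) (?p ^ i)) \<le> ?p ^ (?n - 1)"
      by (simp add: degree_monom_eq)
  qed simp
  have "coeff T (?p ^ (?n - 1)) = (\<Sum>i<?n. if ?p ^ (?n - 1) = ?p ^ i then 1 else 0)"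
    by (simp add: T_def coeff_sum coeff_monom eq_commute)
  also have "\<dots> = (\<Sum>i\<in>{?n - 1}. 1)"
    using p2 n1 by (intro sum.mono_neutral_cong_right) (auto simp: power_inject_exp)
  finally have "coeff T (?p ^ (?n - 1)) = 1" by simp
  then have T0: "T \<noteq> 0" by auto
  have "card {x. poly T x = 0} \<le> ?p ^ (?n - 1)"
    using card_poly_roots_bound[OF T0] degT by simp
  moreover have "{x. poly T x = 0} = UNIV" using H by (auto simp: evT)
  moreover have "?p ^ (?n - 1) < ?p ^ ?n" using p2 n1 by (intro power_strict_increasing) auto
  ultimately show False using card_deg[where 'a='a] by simp
qed

lemma psi_ne1:
  assumes "ff_trace (x::'a::{finite,field}) \<noteq> 0"
  shows "ff_psi x \<noteq> 1"
proof
  assume e: "ff_psi x = 1"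
  let ?p = "CHAR('a)"
  define k where "k = trk x"
  have kp: "k < ?p" using trk[of x] by (simp add: k_def)
  have k0: "k \<noteq> 0"
  proof
    assume "k = 0"
    then have "ff_trace x = 0" using trk[of x] by (simp add: k_def)
    with assms show False by simp
  qed
  have p0: "?p > 0" using kp by simp
  have "exp (\<i> * complex_of_real (2 * pi * k / ?p)) = 1"
    using e by (simp add: psi_ee ee_def k_def mult_ac)
  then have "cos (2 * pi * k / ?p) = 1"
    by (metis cis_conv_exp cis.sel(1) one_complex.sel(1))
  then obtain m :: int where m: "2 * pi * k / ?p = m * 2 * pi" by (auto simp: cos_one_2pi_int)
  then have "real k = m * ?p" using p0 by (simp add: field_simps)
  then have "real k / ?p = m" using p0 by simp
  moreover have "0 < real k / ?p" "real k / ?p < 1" using kp k0 p0 by auto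
  ultimately show False by (metis of_int_0_less_iff of_int_less_1_iff not_le zero_less_iff_neq_zero int_one_le_iff_zero_less)
qed

lemma sum_psi: assumes c: "(c::'a::{finite,field}) \<noteq> 0" shows "(\<Sum>x\<in>UNIV. ff_psi (c * x)) = 0"
proof -
  let ?S = "\<Sum>x\<in>UNIV. ff_psi (x::'a)"
  have 1: "(\<Sum>x\<in>UNIV. ff_psi (c * x)) = ?S"
    by (rule sum.reindex_bij_witness[of _ "\<lambda>y. y / c" "\<lambda>y. c * y"]) (use c in auto)
  obtain x0 :: 'a where x0: "ff_trace x0 \<noteq> 0" using trace_nonzero by blast
  have "ff_psi x0 * ?S = (\<Sum>x\<in>UNIV. ff_psi (x0 + x))"
    by (simp add: sum_distrib_left psi_add)
  also have "\<dots> = ?S"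
    by (rule sum.reindex_bij_witness[of _ "\<lambda>y. y - x0" "\<lambda>y. x0 + y"]) auto
  finally have "(ff_psi x0 - 1) * ?S = 0" by (simp add: algebra_simps)
  with psi_ne1[OF x0] have "?S = 0" by simp
  with 1 show ?thesis by simp
qed


lemma sum_nonzero_psi:
  "(\<Sum>a\<in>{a::'a::{finite,field}. a \<noteq> 0}. ff_psi (a * t)) =
     of_nat (card (UNIV::'a set)) * (if t = 0 then 1 else 0) - 1"
proof -
  have "{a::'a. a \<noteq> 0} = UNIV - {0}" by auto
  then have "(\<Sum>a\<in>{a::'a. a \<noteq> 0}. ff_psi (a * t)) = (\<Sum>a\<in>UNIV. ff_psi (a * t)) - ff_psi (0::'a)"
    by (simp add: sum_diff1)
  also have "(\<Sum>a\<in>UNIV. ff_psi (a * t)) = of_nat (card (UNIV::'a set)) * (if t = 0 then 1 else 0)"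
    using sum_psi[of t] by (auto simp: psi_zero mult.commute)
  finally show ?thesis by (simp add: psi_zero)
qed

lemma pt: fixes x y b :: "'a::{finite,field}"
  shows "ff_psi (x ^ d + y ^ d) * (\<Sum>a\<in>{a::'a. a \<noteq> 0}. ff_psi (a * (x + b * y))) =
      of_nat (card (UNIV::'a set)) * (if x = - (b * y) then ff_psi (x ^ d + y ^ d) else 0) - ff_psi (x ^ d) * ff_psi (y ^ d)"
proof -
  have e: "(x + b * y = 0) = (x = - (b * y))" by (simp add: eq_neg_iff_add_eq_0)
  show ?thesis
    unfolding sum_nonzero_psi e psi_add[of "x ^ d"] by (simp add: right_diff_distrib)
qed

lemma pw: "ff_psi (x ^ d + a * x) * ff_psi (y ^ d + (b * a) * y) =
      ff_psi (x ^ d + y ^ d) * ff_psi (a * (x + b * y))" for x y a b :: "'a::{finite,field}"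
    unfolding psi_add[symmetric] by (rule arg_cong[where f=ff_psi]) (simp add: algebra_simps)

lemma st1: fixes b :: "'a::{finite,field}" shows "(\<Sum>a\<in>{a::'a. a \<noteq> 0}. ff_W d a * ff_W d (b * a)) =
        (\<Sum>a\<in>{a::'a. a \<noteq> 0}. \<Sum>x\<in>UNIV. \<Sum>y\<in>UNIV. ff_psi (x ^ d + y ^ d) * ff_psi (a * (x + b * y)))"
    unfolding ff_W_def sum_product by (simp only: pw)

lemma st2: fixes b :: "'a::{finite,field}" shows "(\<Sum>a\<in>{a::'a. a \<noteq> 0}. \<Sum>x\<in>UNIV. \<Sum>y\<in>UNIV. ff_psi (x ^ d + y ^ d) * ff_psi (a * (x + b * y)))
   = (\<Sum>x\<in>UNIV. \<Sum>y\<in>UNIV. \<Sum>a\<in>{a::'a. a \<noteq> 0}. ff_psi (x ^ d + y ^ d) * ff_psi (a * (x + b * y)))"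
    by (simp only: sum.swap[of _ "{a::'a. a \<noteq> 0}"])


lemma pow_root:
  assumes d: "d \<noteq> 0" and cop: "coprime d (card (UNIV::'a::{finite,field} set) - 1)"
  shows "\<exists>u. \<forall>x::'a. (x ^ d) ^ u = x"
proof -
  let ?q = "card (UNIV::'a set)"
  obtain u v where uv: "d * u = (?q - 1) * v + gcd d (?q - 1)" using bezout_nat[OF d] by blast
  then have uv1: "d * u = (?q - 1) * v + 1" using cop by simp
  have "(x ^ d) ^ u = x" for x :: 'a
  proof (cases "x = 0")
    case True
    have du: "d * u \<noteq> 0" using uv1 by simp
    have "(x ^ d) ^ u = x ^ (d * u)" by (simp add: power_mult)
    then show ?thesis using True du by simp
  next
    case False
    have q0: "?q > 0" by (simp add: card_gt_0_iff)
    obtain m where m: "?q = Suc m" using q0 by (cases ?q) auto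
    have "x * x ^ m = x * 1"
      using pow_card_same[of x] unfolding m by simp
    then have "x ^ m = 1" using False by simp
    then have x1: "x ^ (?q - 1) = 1" using m by simp
    have "(x ^ d) ^ u = x ^ ((?q - 1) * v + 1)" by (simp add: power_mult[symmetric] uv1)
    also have "\<dots> = x" by (simp only: power_add power_mult x1 power_one power_one_right mult_1_left)
    finally show ?thesis .
  qed
  then show ?thesis by blast
qed

theorem lemma5p6:
  fixes d :: nat and b :: "'a::{finite,field}"
  assumes "coprime d (card (UNIV::'a set) - 1)"
    and "b \<noteq> 1"
  shows "(\<Sum>a\<in>{a::'a. a \<noteq> 0}. ff_W d a * ff_W d (b * a)) = 0"
proof (cases "d = 0")
  case True
  have "ff_W d a = 0" if a: "a \<noteq> 0" for a :: 'a
  proof -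
    have "ff_W d a = (\<Sum>x\<in>UNIV. ff_psi (1::'a) * ff_psi (a * x))"
      unfolding ff_W_def using True by (simp add: psi_add)
    also have "\<dots> = 0" by (simp add: sum_distrib_left[symmetric] sum_psi[OF a])
    finally show ?thesis .
  qed
  then show ?thesis by simp
next
  case False
  let ?q = "card (UNIV::'a set)"
  obtain u where u: "\<And>x::'a. (x ^ d) ^ u = x" using pow_root[OF False assms(1)] by blast
  have inj: "inj (\<lambda>x::'a. x ^ d)" proof (rule injI)
    fix x y :: 'a assume "x ^ d = y ^ d"
    then have "(x ^ d) ^ u = (y ^ d) ^ u" by simp
    then show "x = y" by (simp only: u)
  qed
  then have bij: "bij (\<lambda>x::'a. x ^ d)" by (simp add: bij_def finite_UNIV_inj_surj)
  have reidx: "(\<Sum>y\<in>UNIV. ff_psi (c * y ^ d)) = 0" if c: "c \<noteq> 0" for c :: 'a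
  proof -
    have "(\<Sum>y\<in>UNIV. ff_psi (c * y ^ d)) = (\<Sum>y\<in>UNIV. ff_psi (c * y))"
      using sum.reindex_bij_betw[OF bij, of "\<lambda>y. ff_psi (c * y)"] by simp
    then show ?thesis using sum_psi[OF c] by simp
  qed
  have S1: "(\<Sum>y\<in>UNIV. ff_psi ((y::'a) ^ d)) = 0" using reidx[of 1] by simp
  have m1: "(-1::'a) ^ d = -1"
  proof (cases "odd d")
    case True then show ?thesis by simp
  next
    case False
    have "\<not> 2 dvd (?q - 1)"
    proof
      assume "2 dvd (?q - 1)"
      with False have "2 dvd gcd d (?q - 1)" by simp
      with assms(1) show False by simp
    qed
    moreover have "?q \<ge> 2"
    proof -
      have "card {0::'a, 1} \<le> card (UNIV::'a set)" by (rule card_mono) auto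
      then show ?thesis by simp
    qed
    ultimately have "2 dvd ?q" by presburger
    then have "2 = CHAR('a)" by (rule prime_dvd_card[OF two_is_prime_nat])
    then have "(of_nat 2 :: 'a) = 0" by (metis of_nat_CHAR)
    then have "(-1::'a) = 1" by (simp add: eq_neg_iff_add_eq_0)
    then show ?thesis using False by simp
  qed
  have c0: "(-b) ^ d + 1 \<noteq> 0"
  proof
    assume "(-b) ^ d + 1 = 0"
    then have "(-b) ^ d = -1" by (simp add: eq_neg_iff_add_eq_0)
    then have "(-b) ^ d = (-1) ^ d" using m1 by simp
    then have "-b = -1" using inj unfolding inj_def by blast
    with assms(2) show False by simp
  qed
  have "(\<Sum>a\<in>{a::'a. a \<noteq> 0}. ff_W d a * ff_W d (b * a)) =
        (\<Sum>x\<in>UNIV. \<Sum>y\<in>UNIV. \<Sum>a\<in>{a::'a. a \<noteq> 0}. ff_psi (x ^ d + y ^ d) * ff_psi (a * (x + b * y)))"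
    using st1 st2 by (rule trans)
  also have "\<dots> = (\<Sum>x\<in>UNIV. \<Sum>y\<in>UNIV. of_nat ?q * (if x = - (b * y) then ff_psi (x ^ d + y ^ d) else 0)
                    - ff_psi (x ^ d) * ff_psi (y ^ d))"
  proof (intro sum.cong refl)
    fix x y :: 'a
    show "(\<Sum>a\<in>{a::'a. a \<noteq> 0}. ff_psi (x ^ d + y ^ d) * ff_psi (a * (x + b * y))) =
      of_nat ?q * (if x = - (b * y) then ff_psi (x ^ d + y ^ d) else 0) - ff_psi (x ^ d) * ff_psi (y ^ d)"
      using pt[where x=x and y=y and b=b and d=d] unfolding sum_distrib_left .
  qed
  also have "\<dots> = of_nat ?q * (\<Sum>y\<in>UNIV. ff_psi ((-(b * y)) ^ d + y ^ d))
                   - (\<Sum>x\<in>UNIV. ff_psi ((x::'a) ^ d)) * (\<Sum>y\<in>UNIV. ff_psi ((y::'a) ^ d))"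
  proof -
    let ?g = "\<lambda>x y. ff_psi ((x::'a) ^ d + y ^ d)" and ?h = "\<lambda>x. ff_psi ((x::'a) ^ d)"
    have A: "(\<Sum>x\<in>UNIV. \<Sum>y\<in>UNIV. of_nat ?q * (if x = - (b * y) then ?g x y else 0) - ?h x * ?h y)
       = (\<Sum>x\<in>UNIV. \<Sum>y\<in>UNIV. of_nat ?q * (if x = - (b * y) then ?g x y else 0))
         - (\<Sum>x\<in>UNIV. \<Sum>y\<in>UNIV. ?h x * ?h y)"
      by (simp only: sum_subtractf)
    have B: "(\<Sum>x\<in>UNIV. \<Sum>y\<in>UNIV. of_nat ?q * (if x = - (b * y) then ?g x y else 0))
       = of_nat ?q * (\<Sum>x\<in>UNIV. \<Sum>y\<in>UNIV. (if x = - (b * y) then ?g x y else 0))"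
      by (simp only: sum_distrib_left)
    have B1: "(\<Sum>x\<in>UNIV. \<Sum>y\<in>UNIV. (if x = - (b * y) then ?g x y else 0))
       = (\<Sum>y\<in>UNIV. \<Sum>x\<in>UNIV. (if x = - (b * y) then ?g x y else 0))"
      by (rule sum.swap[of "\<lambda>x y. if x = - (b * y) then ?g x y else 0"])
    have C: "(\<Sum>x\<in>UNIV. (if x = - (b * y) then ?g x y else 0)) = ?g (- (b * y)) y" for y
      by (simp add: sum.delta)
    have D: "(\<Sum>x\<in>UNIV. \<Sum>y\<in>UNIV. ?h x * ?h y) = (\<Sum>x\<in>UNIV. ?h x) * (\<Sum>y\<in>UNIV. ?h y)"
      by (simp only: sum_product)
    have E: "(\<Sum>y\<in>UNIV. \<Sum>x\<in>UNIV. (if x = - (b * y) then ?g x y else 0)) = (\<Sum>y\<in>UNIV. ?g (- (b * y)) y)"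
      by (rule sum.cong[OF refl C])
    have F: "(\<Sum>x\<in>UNIV. \<Sum>y\<in>UNIV. of_nat ?q * (if x = - (b * y) then ?g x y else 0))
       = of_nat ?q * (\<Sum>y\<in>UNIV. ?g (- (b * y)) y)"
      by (rule trans[OF B arg_cong[where f="\<lambda>z. of_nat ?q * z", OF trans[OF B1 E]]])
    have R: "(\<Sum>x\<in>UNIV. \<Sum>y\<in>UNIV. of_nat ?q * (if x = - (b * y) then ?g x y else 0) - ?h x * ?h y)
       = of_nat ?q * (\<Sum>y\<in>UNIV. ?g (- (b * y)) y) - (\<Sum>x\<in>UNIV. ?h x) * (\<Sum>y\<in>UNIV. ?h y)"
      by (rule trans[OF A arg_cong2[where f="(-)", OF F D]])
    from R show ?thesis .
  qed
  also have "\<dots> = 0"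
  proof -
    have X: "(\<Sum>y\<in>UNIV. ff_psi ((-(b * y)) ^ d + y ^ d)) = (\<Sum>y\<in>UNIV. ff_psi (((-b) ^ d + 1) * y ^ d))"
    proof (intro sum.cong refl arg_cong[where f=ff_psi])
      fix y :: 'a
      have "(-(b*y)) ^ d = ((-b)*y) ^ d" by simp
      also have "\<dots> = (-b) ^ d * y ^ d" by (rule power_mult_distrib)
      finally show "(-(b*y)) ^ d + y ^ d = ((-b) ^ d + 1) * y ^ d" by (simp only: distrib_right mult_1_left)
    qed
    show ?thesis unfolding X reidx[OF c0] S1 by simp
  qed
  finally show ?thesis .
qed


end
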